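(* Let $a,b\in\mathbb{Z}$ with $\gcd(a,b)=1$. Then $\{G_n(a,b)\}$ is complete mod $3^j$ for every integer $j\ge 1$.
   Context: For integers $a,b$ with $\gcd(a,b)=1$, the Gibonacci sequence $\{G_n(a,b)\}_{n\ge1}$ is defined by $G_1=a$, $G_2=b$, $G_{n+1}=G_{n-1}+G_n$. A sequence is complete mod $m$ if every residue class modulo $m$ contains some term of the sequence. *)

theory Defs
  imports "HOL-Number_Theory.Cong"
begin

text \<open>Gibonacci sequence G_n(a,b), indexed from n = 1: G_1 = a, G_2 = b,
  G_(n+1) = G_(n-1) + G_n. The value at index 0 is a dummy (never used).\<close>
fun gib :: "int \<Rightarrow> int \<Rightarrow> nat \<Rightarrow> int" where
  "gib a b 0 = 0"
| "gib a b (Suc 0) = a"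
| "gib a b (Suc (Suc 0)) = b"
| "gib a b (Suc (Suc (Suc n))) = gib a b (Suc n) + gib a b (Suc (Suc n))"

definition complete_mod :: "(nat \<Rightarrow> int) \<Rightarrow> int \<Rightarrow> bool" where
  "complete_mod G m \<longleftrightarrow> (\<forall>r::int. \<exists>n\<ge>1. [G n = r] (mod m))"

end

theory Submission
  imports Defs
begin

definition recs :: "(nat \<Rightarrow> int) \<Rightarrow> bool" where
  "recs U \<longleftrightarrow> (\<forall>n. U (n+2) = U n + U (n+1))"

lemma recs_div:
  assumes "recs U" "\<And>n. m dvd U (n+P) - U n" "m \<noteq> 0"
  shows "recs (\<lambda>n. (U (n+P) - U n) div m)"
  unfolding recs_def
proof
  fix n
  have e: "\<And>k. m * ((U (k+P) - U k) div m) = U (k+P) - U k"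
    using assms(2) by simp
  have r: "\<And>k. U (k+2) = U k + U (k+1)" using assms(1) unfolding recs_def by blast
  have a: "n+2+P = (n+P)+2" "n+1+P = (n+P)+1" by simp_all
  have "U (n+2+P) - U (n+2) = (U (n+P) - U n) + (U (n+1+P) - U (n+1))"
    unfolding a r by simp
  hence "m * ((U (n+2+P) - U (n+2)) div m) = m * ((U (n+P) - U n) div m + (U (n+1+P) - U (n+1)) div m)"
    unfolding distrib_left e by simp
  thus "(U (n+2+P) - U (n+2)) div m = (U (n+P) - U n) div m + (U (n+1+P) - U (n+1)) div m"
    using assms(3) by simp
qed
lemma rr2: "recs U \<Longrightarrow> k = j+2 \<Longrightarrow> l = j+1 \<Longrightarrow> U k = U j + U l"
  unfolding recs_def by blast

lemma C:
  assumes "recs U"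
  shows "3^(i+2) dvd U (n + 8*3^i) - U n - 3^(i+1) * U (n+2)"
  using assms
proof (induction i arbitrary: U n)
  case 0
  have r: "\<And>k. U (k+2) = U k + U (k+1)" using 0 unfolding recs_def by blast
  have "U (n+2) = U n + U (n+1)" by (rule r)
  moreover have "U (n+3) = U (n+1) + U (n+2)" by (rule rr2[OF 0]) simp_all
  moreover have "U (n+4) = U (n+2) + U (n+3)" by (rule rr2[OF 0]) simp_all
  moreover have "U (n+5) = U (n+3) + U (n+4)" by (rule rr2[OF 0]) simp_all
  moreover have "U (n+6) = U (n+4) + U (n+5)" by (rule rr2[OF 0]) simp_all
  moreover have "U (n+7) = U (n+5) + U (n+6)" by (rule rr2[OF 0]) simp_all
  moreover have "U (n+8) = U (n+6) + U (n+7)" by (rule rr2[OF 0]) simp_all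
  ultimately have "U (n+8) = 13 * U n + 21 * U (n+1)" by linarith
  hence e: "U (n + 8*3^0) - U n - 3^(0+1) * U (n+2) = 9 * (U n + 2 * U (n+1))"
    using r[of n] by simp
  show ?case unfolding e by simp
next
  case (Suc i)
  define m :: int where "m = 3^(i+1)"
  define P :: nat where "P = 8*3^i"
  have m0: "m \<noteq> 0" unfolding m_def by simp
  have p2: "(3::int)^(i+2) = 3 * m" unfolding m_def by simp
  have Dm: "\<And>V k. recs V \<Longrightarrow> m dvd V (k+P) - V k"
  proof -
    fix V k assume "recs V"
    from Suc.IH[OF this, of k] have "3 * m dvd V (k + P) - V k - m * V (k+2)"
      unfolding m_def P_def p2[symmetric] by simp
    hence "m dvd V (k + P) - V k - m * V (k+2)" using dvd_mult_right by blast
    hence "m dvd V (k + P) - V k - m * V (k+2) + m * V (k+2)" by (rule dvd_add) simp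
    thus "m dvd V (k+P) - V k" by simp
  qed
  define W where "W = (\<lambda>k. (U (k+P) - U k) div m)"
  have We: "\<And>k. U (k+P) - U k = m * W k" unfolding W_def using Dm[OF Suc.prems] by simp
  have Wr: "recs W" unfolding W_def by (rule recs_div[OF Suc.prems Dm[OF Suc.prems] m0])
  have W3: "\<And>k. 3 dvd W k - U (k+2)"
  proof -
    fix k
    from Suc.IH[OF Suc.prems, of k] have "3 * m dvd U (k+P) - U k - m * U (k+2)"
      unfolding m_def P_def p2[symmetric] by simp
    hence "m * 3 dvd m * (W k - U (k+2))"
      using We[of k] by (simp add: algebra_simps)
    thus "3 dvd W k - U (k+2)" using m0 by simp
  qed
  define X where "X = (\<lambda>k. (W (k+P) - W k) div m)"
  have Xe: "\<And>k. W (k+P) - W k = m * X k" unfolding X_def using Dm[OF Wr] by simp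
  have Xr: "recs X" unfolding X_def by (rule recs_div[OF Wr Dm[OF Wr] m0])
  have X3: "3 dvd X (n+P) - X n"
  proof -
    have "m dvd X (n+P) - X n" by (rule Dm[OF Xr])
    moreover have "3 dvd m" unfolding m_def by simp
    ultimately show ?thesis using dvd_trans by blast
  qed
  obtain t where t: "X (n+P) - X n = 3 * t" using X3 by blast
  obtain s where s: "W n - U (n+2) = 3 * s" using W3 by blast
  have m3: "m = 3 * 3^i" unfolding m_def by simp
  have i1: "n + 2*P = (n+P)+P" "n+3*P = (n+2*P)+P" by simp_all
  have u3: "U (n + 3*P) = U n + m * (W n + W (n+P) + W (n+2*P))"
    using We[of n] We[of "n+P"] We[of "n+2*P"] unfolding i1 by (simp add: algebra_simps)
  have w2: "W (n+2*P) = W n + m * X n + m * X (n+P)"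
    using Xe[of n] Xe[of "n+P"] unfolding i1 by (simp add: algebra_simps)
  have w1: "W (n+P) = W n + m * X n" using Xe[of n] by simp
  have fin: "U (n + 3*P) - U n - 3 * m * U (n+2) = 9 * m * (s + 3^i * (X n + t))"
    unfolding u3 w2 w1 using s t m3 by (simp add: algebra_simps)
  have q1: "n + 8 * 3 ^ Suc i = n + 3*P" unfolding P_def by simp
  have q2: "(3::int)^(Suc i + 2) = 9 * m" "(3::int)^(Suc i+1) = 3 * m" unfolding m_def by simp_all
  show ?case unfolding q1 q2 fin by simp
qed


lemma D1:
  assumes "recs U"
  shows "3^(i+1) dvd U (n + 8*3^i) - U n"
proof -
  have "3 * 3^(i+1) dvd U (n + 8*3^i) - U n - 3^(i+1) * U (n+2)"
    using C[OF assms, of i n] by simp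
  hence "(3::int)^(i+1) dvd U (n + 8*3^i) - U n - 3^(i+1) * U (n+2)"
    using dvd_mult_right by blast
  hence "(3::int)^(i+1) dvd U (n + 8*3^i) - U n - 3^(i+1) * U (n+2) + 3^(i+1) * U (n+2)"
    by (rule dvd_add) simp
  thus ?thesis by simp
qed

lemma Dk:
  assumes "recs U"
  shows "3^(i+1) dvd U (n + k*(8*3^i)) - U n"
proof (induction k)
  case 0 then show ?case by simp
next
  case (Suc k)
  have e: "n + Suc k * (8*3^i) = (n + k*(8*3^i)) + 8*3^i" by simp
  have "3^(i+1) dvd (U ((n + k*(8*3^i)) + 8*3^i) - U (n + k*(8*3^i))) + (U (n + k*(8*3^i)) - U n)"
    using D1[OF assms] Suc.IH by (rule dvd_add)
  thus ?case unfolding e by simp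
qed

lemma Lk:
  assumes "recs U"
  shows "3^(i+2) dvd U (n + k*(8*3^i)) - U n - int k * 3^(i+1) * U (n+2)"
proof (induction k)
  case 0 then show ?case by simp
next
  case (Suc k)
  define N where "N = n + k*(8*3^i)"
  have e: "n + Suc k * (8*3^i) = N + 8*3^i" unfolding N_def by simp
  have e2: "N + 2 = (n+2) + k*(8*3^i)" unfolding N_def by simp
  have a: "3^(i+2) dvd U (N + 8*3^i) - U N - 3^(i+1) * U (N+2)" by (rule C[OF assms])
  have "3^(i+1) dvd U (N+2) - U (n+2)" unfolding e2 by (rule Dk[OF assms])
  moreover have "(3::int) dvd 3^(i+1)" by simp
  ultimately have "3 dvd U (N+2) - U (n+2)" using dvd_trans by blast
  hence c: "3^(i+1) * 3 dvd 3^(i+1) * (U (N+2) - U (n+2))" by (rule mult_dvd_mono[OF dvd_refl])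
  have "3^(i+2) dvd (U (N + 8*3^i) - U N - 3^(i+1) * U (N+2)) + (U N - U n - int k * 3^(i+1) * U (n+2))
     + 3^(i+1) * (U (N+2) - U (n+2))"
    using a Suc.IH c unfolding N_def by (intro dvd_add) simp_all
  thus ?case unfolding e by (simp add: algebra_simps)
qed

lemma sq3: "\<not> 3 dvd (u::int) \<Longrightarrow> 3 dvd u*u - 1"
proof -
  assume h: "\<not> 3 dvd u"
  define q where "q = u div 3"
  define b where "b = u mod 3"
  have u: "u = 3*q + b" unfolding q_def b_def by simp
  have "b = 1 \<or> b = 2" using h unfolding b_def by presburger
  thus ?thesis
  proof
    assume "b = 1" then have "u*u - 1 = 3*(3*q*q + 2*q)" unfolding u by (simp add: algebra_simps)
    thus ?thesis by simp
  next
    assume "b = 2" then have "u*u - 1 = 3*(3*q*q + 4*q + 1)" unfolding u by (simp add: algebra_simps)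
    thus ?thesis by simp
  qed
qed

definition T :: "int \<Rightarrow> int \<Rightarrow> int \<Rightarrow> int \<Rightarrow> int \<Rightarrow> int \<Rightarrow> bool" where
  "T a b c x y r \<longleftrightarrow> 3 dvd a*x + b*y - c*r"

lemma Tred: "T a b c x y r = T a b c (x mod 3) (y mod 3) (r mod 3)"
proof -
  define x0 x1 y0 y1 r0 r1 where "x0 = x mod 3" "x1 = x div 3" "y0 = y mod 3" "y1 = y div 3" "r0 = r mod 3" "r1 = r div 3"
  have hx: "x = 3*x1 + x0" "y = 3*y1 + y0" "r = 3*r1+r0" unfolding x0_x1_y0_y1_r0_r1_def by simp_all
  have "a*x + b*y - c*r = (a*x0 + b*y0 - c*r0) + 3*(a*x1 + b*y1 - c*r1)"
    unfolding hx by (simp add: algebra_simps)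
  hence "a*x + b*y - c*r = (a*(x mod 3) + b*(y mod 3) - c*(r mod 3)) + 3*(a*x1 + b*y1 - c*r1)"
    unfolding x0_x1_y0_y1_r0_r1_def .
  thus ?thesis unfolding T_def by (metis dvd_add_left_iff dvd_triv_left)
qed

definition G where "G x y r \<longleftrightarrow>
     (T 1 0 1 x y r \<and> \<not> T 1 1 0 x y r) \<or> (T 0 1 1 x y r \<and> \<not> T 1 2 0 x y r)
     \<or> (T 1 1 1 x y r \<and> \<not> T 2 3 0 x y r) \<or> (T 1 2 1 x y r \<and> \<not> T 3 5 0 x y r)
     \<or> (T 2 3 1 x y r \<and> \<not> T 5 8 0 x y r) \<or> (T 3 5 1 x y r \<and> \<not> T 8 13 0 x y r)
     \<or> (T 5 8 1 x y r \<and> \<not> T 13 21 0 x y r) \<or> (T 8 13 1 x y r \<and> \<not> T 21 34 0 x y r)"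

lemma Gred: "G x y r = G (x mod 3) (y mod 3) (r mod 3)"
  unfolding G_def Tred[of _ _ _ x y r] ..

lemma Gfin: "\<forall>x0\<in>{0,1,2}. \<forall>y0\<in>{0,1,2}. \<forall>r0\<in>{0,1,2}. \<not>(x0=0 \<and> y0=0) \<longrightarrow> G x0 y0 r0"
  unfolding G_def T_def by simp

lemma Gall: "\<not> (3 dvd x \<and> 3 dvd y) \<Longrightarrow> G x y r"
proof -
  assume h: "\<not> (3 dvd x \<and> 3 dvd y)"
  have m: "\<And>z::int. z mod 3 \<in> {0,1,2}" by auto
  have "\<not> (x mod 3 = 0 \<and> y mod 3 = 0)" using h by auto
  hence "G (x mod 3) (y mod 3) (r mod 3)" by (rule Gfin[rule_format, OF m[of x] m[of y] m[of r]])
  thus ?thesis using Gred[of x y r] by simp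
qed

lemma E1:
  assumes "recs U" "\<not> (3 dvd U 0 \<and> 3 dvd U 1)"
  shows "\<exists>n. 3 dvd U n - r \<and> \<not> 3 dvd U (n+2)"
proof -
  define x where "x = U 0"
  define y where "y = U 1"
  have u2: "U 2 = x + y" unfolding x_def y_def by (rule rr2[OF assms(1)]) simp_all
  have u3: "U 3 = x + 2*y" proof -
    have "U 3 = U 1 + U 2" by (rule rr2[OF assms(1)]) simp_all
    thus ?thesis using u2 y_def by linarith
  qed
  have u4: "U 4 = 2*x + 3*y" proof -
    have "U 4 = U 2 + U 3" by (rule rr2[OF assms(1)]) simp_all
    thus ?thesis using u2 u3 by linarith
  qed
  have u5: "U 5 = 3*x + 5*y" proof -
    have "U 5 = U 3 + U 4" by (rule rr2[OF assms(1)]) simp_all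
    thus ?thesis using u3 u4 by linarith
  qed
  have u6: "U 6 = 5*x + 8*y" proof -
    have "U 6 = U 4 + U 5" by (rule rr2[OF assms(1)]) simp_all
    thus ?thesis using u4 u5 by linarith
  qed
  have u7: "U 7 = 8*x + 13*y" proof -
    have "U 7 = U 5 + U 6" by (rule rr2[OF assms(1)]) simp_all
    thus ?thesis using u5 u6 by linarith
  qed
  have u8: "U 8 = 13*x + 21*y" proof -
    have "U 8 = U 6 + U 7" by (rule rr2[OF assms(1)]) simp_all
    thus ?thesis using u6 u7 by linarith
  qed
  have u9: "U 9 = 21*x + 34*y" proof -
    have "U 9 = U 7 + U 8" by (rule rr2[OF assms(1)]) simp_all
    thus ?thesis using u7 u8 by linarith
  qed
  have nz: "\<not> (3 dvd x \<and> 3 dvd y)" using assms(2) unfolding x_def y_def .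
  have "G x y r" using Gall[OF nz] .
  hence D1: "(3 dvd U 0 - r \<and> \<not> 3 dvd U 2) \<or> (3 dvd U 1 - r \<and> \<not> 3 dvd U 3)
     \<or> (3 dvd U 2 - r \<and> \<not> 3 dvd U 4) \<or> (3 dvd U 3 - r \<and> \<not> 3 dvd U 5)
     \<or> (3 dvd U 4 - r \<and> \<not> 3 dvd U 6) \<or> (3 dvd U 5 - r \<and> \<not> 3 dvd U 7)
     \<or> (3 dvd U 6 - r \<and> \<not> 3 dvd U 8) \<or> (3 dvd U 7 - r \<and> \<not> 3 dvd U 9)"
    unfolding G_def T_def u2 u3 u4 u5 u6 u7 u8 u9 x_def[symmetric] y_def[symmetric]
    by (simp only: mult_1 mult_zero_left add_0 diff_0_right add_0_right)
  hence "(3 dvd U 0 - r \<and> \<not> 3 dvd U (0+2)) \<or> (3 dvd U 1 - r \<and> \<not> 3 dvd U (1+2))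
     \<or> (3 dvd U 2 - r \<and> \<not> 3 dvd U (2+2)) \<or> (3 dvd U 3 - r \<and> \<not> 3 dvd U (3+2))
     \<or> (3 dvd U 4 - r \<and> \<not> 3 dvd U (4+2)) \<or> (3 dvd U 5 - r \<and> \<not> 3 dvd U (5+2))
     \<or> (3 dvd U 6 - r \<and> \<not> 3 dvd U (6+2)) \<or> (3 dvd U 7 - r \<and> \<not> 3 dvd U (7+2))"
  proof -
    have e: "(0::nat)+2 = 2" "(1::nat)+2 = 3" "(2::nat)+2 = 4" "(3::nat)+2 = 5" "(4::nat)+2 = 6"
      "(5::nat)+2 = 7" "(6::nat)+2 = 8" "(7::nat)+2 = 9" by simp_all
    show ?thesis unfolding e by (rule D1)
  qed
  thus ?thesis by blast
qed


lemma E: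
  assumes "recs U" "\<not> (3 dvd U 0 \<and> 3 dvd U 1)"
  shows "\<exists>n. 3^(i+1) dvd U n - r \<and> \<not> 3 dvd U (n+2)"
proof (induction i arbitrary: r)
  case 0 show ?case using E1[OF assms, of r] by simp
next
  case (Suc i)
  define m :: int where "m = 3^(i+1)"
  define P :: nat where "P = 8*3^i"
  obtain n where n1: "m dvd U n - r" and n2: "\<not> 3 dvd U (n+2)" using Suc.IH[of r] unfolding m_def by blast
  have "m dvd r - U n" using n1 by (simp add: dvd_diff_commute)
  then obtain d where d: "r - U n = m*d" by blast
  define u where "u = U (n+2)"
  define k where "k = nat ((d*u) mod 3)"
  have kk: "int k = (d*u) mod 3" unfolding k_def by simp
  obtain w where w: "u*u - 1 = 3*w" using sq3[of u] n2 unfolding u_def by blast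
  have h: "(d*u) div 3 * 3 + (d*u) mod 3 = d*u" by (rule div_mult_mod_eq)
  hence hm: "(d*u) mod 3 = d*u - (d*u) div 3 * 3" by linarith
  have "int k * u - d = d*(u*u - 1) - 3*((d*u) div 3)*u"
    unfolding kk hm by (simp add: algebra_simps)
  also have "\<dots> = 3*(d*w - ((d*u) div 3)*u)" unfolding w by (simp add: algebra_simps)
  finally have k3: "3 dvd int k * u - d" by simp
  have L: "3^(i+2) dvd U (n + k*P) - U n - int k * 3^(i+1) * U (n+2)"
    unfolding P_def by (rule Lk[OF assms(1)])
  have p: "(3::int)^(i+2) = 3*m" "(3::int)^(Suc i+1) = 3*m" unfolding m_def by simp_all
  have eq: "U (n+k*P) - r = (U (n + k*P) - U n - int k * m * u) + m*(int k*u - d)"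
    using d by (simp add: algebra_simps)
  have c: "m*3 dvd m*(int k*u - d)" using k3 by (rule mult_dvd_mono[OF dvd_refl])
  have A: "3*m dvd U (n+k*P) - r" unfolding eq
    using L c unfolding p m_def[symmetric] u_def by (intro dvd_add) (simp_all add: mult.commute)
  have e2: "n + k*P + 2 = (n+2) + k*P" by simp
  have "3^(i+1) dvd U ((n+2) + k*P) - U (n+2)" unfolding P_def by (rule Dk[OF assms(1)])
  moreover have "(3::int) dvd 3^(i+1)" by simp
  ultimately have "3 dvd U (n + k*P + 2) - U (n+2)" unfolding e2 using dvd_trans by blast
  hence B: "\<not> 3 dvd U (n + k*P + 2)"
  proof (intro notI)
    assume h1: "3 dvd U (n + k*P + 2) - U (n+2)" and h2: "3 dvd U (n + k*P + 2)"
    have "3 dvd U (n + k*P + 2) - (U (n + k*P + 2) - U (n+2))" using h2 h1 by (rule dvd_diff)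
    thus False using n2 by simp
  qed
  show ?case using A B unfolding p by blast
qed

lemma recs_gib: "recs (\<lambda>n. gib a b (n+1))"
  unfolding recs_def
proof
  fix n
  have e: "n+2+1 = Suc (Suc (Suc n))" "n+1 = Suc n" "n+1+1 = Suc (Suc n)" by simp_all
  show "gib a b (n+2+1) = gib a b (n+1) + gib a b (n+1+1)" unfolding e by simp
qed

theorem mainTheorem9:
  fixes a b :: int and j :: nat
  assumes "gcd a b = 1" and "j \<ge> 1"
  shows "complete_mod (gib a b) (3 ^ j)"
  unfolding complete_mod_def
proof
  fix r :: int
  obtain i where j: "j = i+1" using assms(2) by (metis le_add_diff_inverse2)
  have nd: "\<not> (3 dvd gib a b (0+1) \<and> 3 dvd gib a b (1+1))"
  proof
    assume "3 dvd gib a b (0+1) \<and> 3 dvd gib a b (1+1)"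
    hence "3 dvd a" "3 dvd b" by (simp_all add: numeral_eq_Suc)
    hence "3 dvd gcd a b" by simp
    thus False using assms(1) by simp
  qed
  obtain n where "3^(i+1) dvd gib a b (n+1) - r"
    using E[OF recs_gib, of a b i r] nd by auto
  hence "[gib a b (n+1) = r] (mod 3^j)" unfolding j cong_iff_dvd_diff .
  thus "\<exists>n\<ge>1. [gib a b n = r] (mod 3 ^ j)" by (intro exI[of _ "n+1"]) simp
qed

end
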